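(* Let $\Sigma\subset\mathbb G$ be a regular surface and $\gamma=(\gamma_1,\gamma_2,\gamma_3):[a,b]\to\Sigma$ a Euclidean $C^2$-smooth regular curve, and let $t\in[a,b]$ be such that $\gamma(t)$ is a non-characteristic point of $\Sigma$, with $\bar p,\bar q$ evaluated at $\gamma(t)$. Write $\omega(\dot\gamma(t))=\frac{\dot\gamma_2}{\gamma_1}-\dot\gamma_3$. (i) If $\omega(\dot\gamma(t))\ne0$, then $\lim_{L\to+\infty}k^L_{\gamma,\Sigma}$ exists and equals $\dfrac{|\bar p\dot\gamma_1+\bar q\dot\gamma_2|}{|\gamma_1|\,|\omega(\dot\gamma(t))|}$. (ii) If $\omega(\dot\gamma(t))=0$ and $\frac{d}{dt}\omega(\dot\gamma(t))=0$, then $\lim_{L\to+\infty}k^L_{\gamma,\Sigma}=0$. (iii) If $\omega(\dot\gamma(t))=0$ and $\frac{d}{dt}\omega(\dot\gamma(t))\ne0$, then $$\lim_{L\to+\infty}\frac{k^L_{\gamma,\Sigma}}{\sqrt L}=\frac{\big|\frac{d}{dt}\omega(\dot\gamma(t))\big|}{\big(\bar q\frac{\dot\gamma_1}{\gamma_1}-\bar p\dot\gamma_3\big)^2}.$$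
   Context: $\mathbb G=(0,\infty)\times\mathbb R^2$ is the affine group with coordinates $(x_1,x_2,x_3)$. Let $X_1=x_1\partial_{x_1}$, $X_2=x_1\partial_{x_2}+\partial_{x_3}$, $X_3=x_1\partial_{x_2}$ with dual forms $\omega_1=x_1^{-1}dx_1$, $\omega_2=dx_3$, $\omega=x_1^{-1}dx_2-dx_3$; for $L>0$, $g_L=\omega_1\otimes\omega_1+\omega_2\otimes\omega_2+L\,\omega\otimes\omega$ (so $X_1,X_2,\widetilde X_3:=L^{-1/2}X_3$ is orthonormal) with Levi-Civita connection $\nabla^L$. A regular surface is a Euclidean $C^2$-smooth compact oriented surface $\Sigma=\{u=0\}$ with $u$ Euclidean $C^2$ and nonvanishing Euclidean gradient. Put $p=X_1u$, $q=X_2u$, $l=\sqrt{p^2+q^2}$, $\bar p=p/l$, $\bar q=q/l$; a point is non-characteristic if $l\neq0$. Let $\nabla^{\Sigma,L}_UV$ be the $g_L$-orthogonal projection of $\nabla^L_UV$ onto $T\Sigma$ (the Levi-Civita connection of the induced metric). The geodesic curvature of $\gamma$ is $$k^L_{\gamma,\Sigma}=\sqrt{\frac{\|\nabla^{\Sigma,L}_{\dot\gamma}\dot\gamma\|_L^2}{\|\dot\gamma\|_L^4}-\frac{\langle\nabla^{\Sigma,L}_{\dot\gamma}\dot\gamma,\dot\gamma\rangle_L^2}{\|\dot\gamma\|_L^6}}.$$ *)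

theory Defs
  imports "HOL-Analysis.Analysis"
begin

text \<open>The affine group G = (0,oo) x R^2, points are x :: real^3 with
  coordinates x$1, x$2, x$3.\<close>
definition Gset :: "(real^3) set" where
  "Gset = {x. x$1 > 0}"

definition om1 :: "real^3 \<Rightarrow> real^3 \<Rightarrow> real" where
  "om1 x v = v$1 / x$1"
definition om2 :: "real^3 \<Rightarrow> real^3 \<Rightarrow> real" where
  "om2 x v = v$3"
definition om :: "real^3 \<Rightarrow> real^3 \<Rightarrow> real" where
  "om x v = v$2 / x$1 - v$3"

definition gL :: "real \<Rightarrow> real^3 \<Rightarrow> real^3 \<Rightarrow> real^3 \<Rightarrow> real" where
  "gL L x v w = om1 x v * om1 x w + om2 x v * om2 x w + L * om x v * om x w"

definition gmat :: "real \<Rightarrow> real^3 \<Rightarrow> real^3^3" where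
  "gmat L x = (\<chi> i j. gL L x (axis i 1) (axis j 1))"

definition dg :: "real \<Rightarrow> 3 \<Rightarrow> 3 \<Rightarrow> 3 \<Rightarrow> real^3 \<Rightarrow> real" where
  "dg L l i j x = deriv (\<lambda>s. gL L (x + s *\<^sub>R axis l 1) (axis i 1) (axis j 1)) 0"

definition christoffel :: "real \<Rightarrow> 3 \<Rightarrow> 3 \<Rightarrow> 3 \<Rightarrow> real^3 \<Rightarrow> real" where
  "christoffel L k i j x = (1/2) * (\<Sum>l\<in>UNIV. matrix_inv (gmat L x) $ k $ l *
      (dg L i j l x + dg L j i l x - dg L l i j x))"

text \<open>Covariant acceleration nabla^L_{gamma'} gamma' at a point x of a curve with
  velocity v and (coordinate) second derivative a.\<close>
definition cov_acc :: "real \<Rightarrow> real^3 \<Rightarrow> real^3 \<Rightarrow> real^3 \<Rightarrow> real^3" where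
  "cov_acc L x v a = (\<chi> k. a$k + (\<Sum>i\<in>UNIV. \<Sum>j\<in>UNIV. christoffel L k i j x * v$i * v$j))"

text \<open>g_L-orthogonal projection of w onto the tangent plane {v. n . v = 0}, where n is the
  Euclidean gradient of the defining function u at x.\<close>
definition tproj :: "real \<Rightarrow> real^3 \<Rightarrow> real^3 \<Rightarrow> real^3 \<Rightarrow> real^3" where
  "tproj L n x w = (THE v. n \<bullet> v = 0 \<and> (\<forall>z. n \<bullet> z = 0 \<longrightarrow> gL L x (w - v) z = 0))"

text \<open>Geodesic curvature k^L_{gamma,Sigma} at a point x with velocity v and coordinate
  second derivative a, n being the Euclidean gradient of u at x.\<close>
definition geod_curv :: "real \<Rightarrow> real^3 \<Rightarrow> real^3 \<Rightarrow> real^3 \<Rightarrow> real^3 \<Rightarrow> real" where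
  "geod_curv L n x v a =
     (let N = tproj L n x (cov_acc L x v a); nv = sqrt (gL L x v v)
      in sqrt (gL L x N N / nv ^ 4 - (gL L x N v)\<^sup>2 / nv ^ 6))"

text \<open>p = X_1 u, q = X_2 u, l, pbar, qbar, in terms of the Euclidean gradient n of u at x.\<close>
definition pX :: "real^3 \<Rightarrow> real^3 \<Rightarrow> real" where
  "pX n x = x$1 * n$1"
definition qX :: "real^3 \<Rightarrow> real^3 \<Rightarrow> real" where
  "qX n x = x$1 * n$2 + n$3"
definition lX :: "real^3 \<Rightarrow> real^3 \<Rightarrow> real" where
  "lX n x = sqrt ((pX n x)\<^sup>2 + (qX n x)\<^sup>2)"
definition pbar :: "real^3 \<Rightarrow> real^3 \<Rightarrow> real" where
  "pbar n x = pX n x / lX n x"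
definition qbar :: "real^3 \<Rightarrow> real^3 \<Rightarrow> real" where
  "qbar n x = qX n x / lX n x"

end

theory Submission
  imports Defs
begin

definition ee :: "3 \<Rightarrow> 3 \<Rightarrow> real" where "ee i k = (if i = k then 1 else 0)"

definition gf :: "real \<Rightarrow> 3 \<Rightarrow> 3 \<Rightarrow> real \<Rightarrow> real" where
  "gf L i j s = ee i 1 * ee j 1 / s^2 + ee i 3 * ee j 3 + L * (ee i 2 / s - ee i 3) * (ee j 2 / s - ee j 3)"

definition gf' :: "real \<Rightarrow> 3 \<Rightarrow> 3 \<Rightarrow> real \<Rightarrow> real" where
  "gf' L i j s = -2 * ee i 1 * ee j 1 / s^3 + L * ((- ee i 2 / s^2) * (ee j 2 / s - ee j 3) + (ee i 2 / s - ee i 3) * (- ee j 2 / s^2))"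

lemma axis_comp: "axis i (1::real) $ k = ee i k"
  by (simp add: axis_def ee_def)

lemma gL_axis: "gL L y (axis i 1) (axis j 1) = gf L i j (y$1)"
  by (simp add: gL_def om1_def om2_def om_def axis_comp gf_def power2_eq_square)

lemma gf_deriv: "s > 0 \<Longrightarrow> (gf L i j has_real_derivative gf' L i j s) (at s)"
  unfolding gf_def gf'_def
  apply (rule derivative_eq_intros refl | simp)+
  apply (simp add: field_simps power2_eq_square power3_eq_cube eval_nat_numeral)
  done


lemma dg_eq: assumes "x$1 > 0" shows "dg L l i j x = ee l 1 * gf' L i j (x$1)"
proof -
  have e: "(\<lambda>s. gL L (x + s *\<^sub>R axis l 1) (axis i 1) (axis j 1)) = (\<lambda>s. gf L i j (x$1 + s * ee l 1))"
    by (simp add: gL_axis axis_comp)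
  have "((\<lambda>s. gf L i j (x$1 + s * ee l 1)) has_real_derivative gf' L i j (x$1 + 0 * ee l 1) * ee l 1) (at 0)"
    apply (rule DERIV_chain2[where f="gf L i j"])
    using gf_deriv assms apply simp
    apply (rule derivative_eq_intros refl | simp)+
    done
  then show ?thesis unfolding dg_def e by (simp add: DERIV_imp_deriv mult.commute)
qed


definition minv :: "real \<Rightarrow> real \<Rightarrow> 3 \<Rightarrow> 3 \<Rightarrow> real" where
  "minv L s k l = (if k = 1 \<and> l = 1 then s^2 else if k = 2 \<and> l = 2 then s^2 * (1 + L) / L
     else if (k = 2 \<and> l = 3) \<or> (k = 3 \<and> l = 2) then s else if k = 3 \<and> l = 3 then 1 else 0)"

lemma three_neq[simp]: "(1::3) \<noteq> 2" "(1::3) \<noteq> 3" "(2::3) \<noteq> 3" "(2::3) \<noteq> 1" "(3::3) \<noteq> 1" "(3::3) \<noteq> 2"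
  by simp_all

lemma matrix_inv_eq:
  assumes "x$1 > 0" "L > 0"
  shows "matrix_inv (gmat L x) = (\<chi> k l. minv L (x$1) k l)"
proof -
  let ?B = "(\<chi> k l. minv L (x$1) k l)"
  have g: "gmat L x = (\<chi> i j. gf L i j (x$1))" by (simp add: gmat_def gL_axis)
  have 1: "gmat L x ** ?B = mat 1" using assms
    unfolding g by (simp add: matrix_matrix_mult_def vec_eq_iff forall_3 sum_3 mat_def gf_def minv_def ee_def field_simps power2_eq_square)
  have 2: "?B ** gmat L x = mat 1" using assms
    unfolding g by (simp add: matrix_matrix_mult_def vec_eq_iff forall_3 sum_3 mat_def gf_def minv_def ee_def field_simps power2_eq_square)
  have "\<exists>A'. gmat L x ** A' = mat 1 \<and> A' ** gmat L x = mat 1" using 1 2 by blast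
  then have s: "gmat L x ** matrix_inv (gmat L x) = mat 1 \<and> matrix_inv (gmat L x) ** gmat L x = mat 1"
    unfolding matrix_inv_def by (rule someI_ex)
  have "matrix_inv (gmat L x) = matrix_inv (gmat L x) ** (gmat L x ** ?B)" using 1 by (simp add: matrix_mul_rid)
  also have "\<dots> = (matrix_inv (gmat L x) ** gmat L x) ** ?B" by (simp add: matrix_mul_assoc)
  also have "\<dots> = ?B" using s by (simp add: matrix_mul_lid)
  finally show ?thesis .
qed

lemma christoffel_eq:
  assumes "x$1 > 0" "L > 0"
  shows "christoffel L k i j x = (1/2) * (\<Sum>l\<in>UNIV. minv L (x$1) k l *
      (ee i 1 * gf' L j l (x$1) + ee j 1 * gf' L i l (x$1) - ee l 1 * gf' L i j (x$1)))"
  using assms by (simp add: christoffel_def matrix_inv_eq dg_eq)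

lemma cov_acc_eq:
  assumes "x$1 > 0" "L > 0"
  shows "cov_acc L x v a $ 1 = a$1 + L * v$2 * (v$2 / x$1 - v$3) - (v$1)^2 / x$1"
    "cov_acc L x v a $ 2 = a$2 - 2 * v$1 * v$2 / x$1 + v$1 * v$3 - L * v$1 * (v$2 / x$1 - v$3)"
    "cov_acc L x v a $ 3 = a$3 - L * v$1 * (v$2 / x$1 - v$3) / x$1"
  using assms
    apply (simp_all add: cov_acc_def christoffel_eq sum_3 minv_def ee_def gf'_def)
    apply (simp_all add: field_simps power2_eq_square power3_eq_cube)
  done

lemma gL_diff_left: "gL L x (u - w) z = gL L x u z - gL L x w z"
  by (simp add: gL_def om1_def om2_def om_def algebra_simps diff_divide_distrib)
lemma gL_scale_left: "gL L x (c *\<^sub>R u) z = c * gL L x u z"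
  by (simp add: gL_def om1_def om2_def om_def algebra_simps)
lemma gL_sym: "gL L x u z = gL L x z u"
  by (simp add: gL_def algebra_simps)
lemma gL_diff_right: "gL L x z (u - w) = gL L x z u - gL L x z w"
  by (metis gL_diff_left gL_sym)
lemma gL_scale_right: "gL L x z (c *\<^sub>R u) = c * gL L x z u"
  by (metis gL_scale_left gL_sym)

lemma gL_nonneg: assumes "L \<ge> 0" shows "gL L x d d \<ge> 0"
proof -
  have "L * om x d * om x d = L * (om x d)^2" by (simp add: power2_eq_square)
  moreover have "L * (om x d)^2 \<ge> 0" using assms by simp
  moreover have "om1 x d * om1 x d \<ge> 0" "om2 x d * om2 x d \<ge> 0" by auto
  ultimately show ?thesis unfolding gL_def by linarith
qed

lemma gL_posdef: assumes "x$1 > 0" "L > 0" "gL L x d d = 0" shows "d = 0"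
proof -
  have "om1 x d * om1 x d + om2 x d * om2 x d + L * om x d * om x d = 0" using assms(3) by (simp add: gL_def)
  moreover have "om1 x d * om1 x d \<ge> 0" "om2 x d * om2 x d \<ge> 0" "L * om x d * om x d \<ge> 0" using assms(2) by (auto simp: mult.assoc)
  ultimately have "om1 x d * om1 x d = 0" "om2 x d * om2 x d = 0" "L * om x d * om x d = 0" by linarith+
  then have "om1 x d = 0" "om2 x d = 0" "om x d = 0" using assms(2) by auto
  then show ?thesis using assms(1) by (simp add: om1_def om2_def om_def vec_eq_iff forall_3)
qed

definition mvec :: "real \<Rightarrow> real^3 \<Rightarrow> real^3 \<Rightarrow> real^3" where
  "mvec L n x = (\<chi> k. \<Sum>l\<in>UNIV. minv L (x$1) k l * n$l)"

definition Dn :: "real \<Rightarrow> real^3 \<Rightarrow> real^3 \<Rightarrow> real" where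
  "Dn L n x = (pX n x)^2 + (qX n x)^2 + (x$1 * n$2)^2 / L"

lemma dot_frame: "x$1 > 0 \<Longrightarrow> n \<bullet> w = pX n x * om1 x w + qX n x * om2 x w + (x$1 * n$2) * om x w"
  by (simp add: inner_vec_def sum_3 pX_def qX_def om1_def om2_def om_def field_simps)

lemma gL_mvec: "x$1 > 0 \<Longrightarrow> L > 0 \<Longrightarrow> gL L x (mvec L n x) z = n \<bullet> z"
  by (simp add: inner_vec_def sum_3 mvec_def minv_def gL_def om1_def om2_def om_def field_simps power2_eq_square)

lemma n_mvec: "x$1 > 0 \<Longrightarrow> L > 0 \<Longrightarrow> n \<bullet> mvec L n x = Dn L n x"
  by (simp add: inner_vec_def sum_3 mvec_def minv_def Dn_def pX_def qX_def field_simps power2_eq_square)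

lemma tproj_eq:
  assumes x: "x$1 > 0" and L: "L > 0" and D: "Dn L n x > 0"
  shows "tproj L n x w = w - ((n \<bullet> w) / Dn L n x) *\<^sub>R mvec L n x"
  unfolding tproj_def
proof (rule the_equality)
  let ?c = "w - ((n \<bullet> w) / Dn L n x) *\<^sub>R mvec L n x"
  have 1: "n \<bullet> ?c = 0" using D x L by (simp add: inner_diff_right n_mvec)
  have 2: "gL L x (w - ?c) z = 0" if "n \<bullet> z = 0" for z
    using that x L by (simp add: gL_scale_left gL_mvec)
  show "n \<bullet> ?c = 0 \<and> (\<forall>z. n \<bullet> z = 0 \<longrightarrow> gL L x (w - ?c) z = 0)" using 1 2 by blast
  fix v assume v: "n \<bullet> v = 0 \<and> (\<forall>z. n \<bullet> z = 0 \<longrightarrow> gL L x (w - v) z = 0)"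
  have dz: "n \<bullet> (v - ?c) = 0" using v 1 by (simp add: inner_diff_right)
  have "gL L x (w - v) (v - ?c) = 0" using v dz by blast
  moreover have "gL L x (w - ?c) (v - ?c) = 0" using 2 dz by blast
  ultimately have "gL L x (v - ?c) (v - ?c) = 0"
    by (metis (no_types, lifting) diff_diff_eq2 diff_self gL_diff_left diff_zero eq_iff_diff_eq_0 add_diff_cancel_left')
  then have "v - ?c = 0" using gL_posdef[OF x L] by blast
  then show "v = ?c" by simp
qed


definition Fk :: "real \<Rightarrow> real \<Rightarrow> real \<Rightarrow> real \<Rightarrow> real \<Rightarrow> real \<Rightarrow> real \<Rightarrow> real \<Rightarrow> real \<Rightarrow> real \<Rightarrow> real" where
  "Fk L c1 c2 c3 e1 e2 e3 p q r =
    (let a1 = e1 + L * (c2 + c3) * c3; a2 = e2 - L * c1 * c3; a3 = e3;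
         V = c1^2 + c2^2 + L * c3^2 in
     ((a1^2 + a2^2 + L * a3^2) - (p * a1 + q * a2 + r * a3)^2 / (p^2 + q^2 + r^2 / L)) / V^2
       - (a1 * c1 + a2 * c2 + L * a3 * c3)^2 / V^3)"

lemma om_cov:
  assumes x: "x$1 > 0" and L: "L > 0"
  shows "om1 x (cov_acc L x v a) = (a$1/x$1 - (v$1)^2/(x$1)^2) + L * (v$3 + (v$2/x$1 - v$3)) * (v$2/x$1 - v$3)"
    "om2 x (cov_acc L x v a) = a$3 - L * (v$1/x$1) * (v$2/x$1 - v$3)"
    "om x (cov_acc L x v a) = a$2/x$1 - 2* v$1* v$2/(x$1)^2 + v$1* v$3/x$1 - a$3"
  using x L by (simp_all add: om1_def om2_def om_def cov_acc_eq field_simps power2_eq_square)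

lemma geod_eq:
  assumes x: "x$1 > 0" and L: "L > 0" and nv: "n \<bullet> v = 0" and D: "Dn L n x > 0"
  shows "geod_curv L n x v a = sqrt (Fk L (v$1/x$1) (v$3) (v$2/x$1 - v$3)
     (a$1/x$1 - (v$1)^2/(x$1)^2) (a$3) (a$2/x$1 - 2* v$1* v$2/(x$1)^2 + v$1* v$3/x$1 - a$3)
     (pX n x) (qX n x) (x$1 * n$2))"
proof -
  define A where "A = cov_acc L x v a"
  define c where "c = (n \<bullet> A) / Dn L n x"
  define m where "m = mvec L n x"
  have N: "tproj L n x A = A - c *\<^sub>R m" unfolding c_def m_def using tproj_eq[OF x L D] .
  have gm: "gL L x m z = n \<bullet> z" for z unfolding m_def using gL_mvec[OF x L] .
  have gm': "gL L x z m = n \<bullet> z" for z using gm gL_sym by metis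
  have nm: "n \<bullet> m = Dn L n x" unfolding m_def using n_mvec[OF x L] .
  have nm': "m \<bullet> n = Dn L n x" using nm by (simp add: inner_commute)
  have NN: "gL L x (A - c *\<^sub>R m) (A - c *\<^sub>R m) = gL L x A A - (n \<bullet> A)^2 / Dn L n x"
  proof -
    have "gL L x (A - c *\<^sub>R m) (A - c *\<^sub>R m) = gL L x A A - c * (n \<bullet> A) - c * (n \<bullet> A) + c * (c * Dn L n x)"
      by (simp add: gL_diff_left gL_diff_right gL_scale_left gL_scale_right gm gm' nm algebra_simps)
    also have "\<dots> = gL L x A A - (n \<bullet> A)^2 / Dn L n x"
      using D unfolding c_def by (simp add: field_simps power2_eq_square)
    finally show ?thesis .
  qed
  have Nv: "gL L x (A - c *\<^sub>R m) v = gL L x A v"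
    by (simp add: gL_diff_left gL_scale_left gm nv)
  have vv: "gL L x v v \<ge> 0" using gL_nonneg L by auto
  have s4: "(sqrt (gL L x v v))^4 = (gL L x v v)^2"
  proof -
    have "(sqrt (gL L x v v))^4 = ((sqrt (gL L x v v))^2)^2" by (simp flip: power_mult)
    then show ?thesis using vv by simp
  qed
  have s6: "(sqrt (gL L x v v))^6 = (gL L x v v)^3"
  proof -
    have "(sqrt (gL L x v v))^6 = ((sqrt (gL L x v v))^2)^3" by (simp flip: power_mult)
    then show ?thesis using vv by simp
  qed
  have geq: "geod_curv L n x v a = sqrt ((gL L x A A - (n \<bullet> A)^2 / Dn L n x) / (gL L x v v)^2 - (gL L x A v)^2 / (gL L x v v)^3)"
    unfolding geod_curv_def Let_def A_def[symmetric] N NN Nv s4 s6 ..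
  note oc = om_cov[OF x L, of v a, folded A_def]
  have o1: "om1 x v = v$1/x$1" "om2 x v = v$3" "om x v = v$2/x$1 - v$3" by (simp_all add: om1_def om2_def om_def)
  have AA: "gL L x A A = (om1 x A)^2 + (om2 x A)^2 + L * (om x A)^2" by (simp add: gL_def power2_eq_square)
  have VV: "gL L x v v = (om1 x v)^2 + (om2 x v)^2 + L * (om x v)^2" by (simp add: gL_def power2_eq_square)
  have AV: "gL L x A v = om1 x A * om1 x v + om2 x A * om2 x v + L * om x A * om x v" by (simp add: gL_def)
  show ?thesis unfolding geq AA VV AV dot_frame[OF x, of n A] Dn_def Fk_def Let_def oc o1 ..
qed

lemma red_lemma:
  fixes L P N D Y Gv :: real
  assumes "L \<noteq> 0"
  shows "(L^2*P - (L*N)^2/D)/(L*Y)^2 - (L*Gv)^2/(L*Y)^3 = (P - N^2/D)/Y^2 - inverse L * Gv^2/Y^3"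
proof (cases "Y = 0")
  case True then show ?thesis by simp
next
  case False
  then show ?thesis using assms by (simp add: field_simps power2_eq_square power3_eq_cube)
qed

lemma aux: "(c::real) \<noteq> 0 \<Longrightarrow> l \<noteq> 0 \<Longrightarrow> (c * Z / l)/c^2 = Z/(l*c)"
  by (simp add: field_simps power2_eq_square)

lemma lim_i:
  fixes c1 c2 c3 e1 e2 e3 p q r :: real
  assumes c3: "c3 \<noteq> 0" and l: "p^2 + q^2 > 0"
  shows "((\<lambda>L. Fk L c1 c2 c3 e1 e2 e3 p q r) \<longlongrightarrow> (p*c1 + q*(c2+c3))^2/((p^2+q^2)*c3^2)) at_top"
proof -
  define W where "W = c1^2 + c2^2"
  define g1 where "g1 = (c2+c3)*c3"
  define G where "G s = ((s*e1 + g1)^2 + (s*e2 - c1*c3)^2 + s*e3^2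
      - (s*(p*e1+q*e2+r*e3) + (p*g1 - q*(c1*c3)))^2/(p^2+q^2+r^2* s))/(s*W+c3^2)^2
      - s*(s*(e1*c1+e2*c2) + (g1*c1 - c1*c3*c2 + e3*c3))^2/(s*W+c3^2)^3" for s
  have W0: "W \<ge> 0" unfolding W_def by simp
  have c3p: "c3^2 > 0" using c3 by simp
  have ev: "\<forall>\<^sub>F L in at_top. G (inverse L) = Fk L c1 c2 c3 e1 e2 e3 p q r"
    using eventually_gt_at_top[of 0]
  proof (rule eventually_mono)
    fix L :: real assume L: "L > 0"
    let ?s = "inverse L"
    have a1: "e1 + L * (c2 + c3) * c3 = L * (?s*e1 + g1)" using L by (simp add: g1_def field_simps)
    have a2: "e2 - L * c1 * c3 = L * (?s*e2 - c1*c3)" using L by (simp add: field_simps)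
    have V: "c1^2 + c2^2 + L * c3^2 = L * (?s*W + c3^2)" using L by (simp add: W_def field_simps)
    have P: "(L * (?s*e1 + g1))^2 + (L * (?s*e2 - c1*c3))^2 + L * e3^2
       = L^2 * ((?s*e1 + g1)^2 + (?s*e2 - c1*c3)^2 + ?s*e3^2)"
      using L by (simp add: field_simps power2_eq_square)
    have N: "p * (L * (?s*e1 + g1)) + q * (L * (?s*e2 - c1*c3)) + r * e3
       = L * (?s*(p*e1+q*e2+r*e3) + (p*g1 - q*(c1*c3)))" using L by (simp add: field_simps)
    have D: "p^2 + q^2 + r^2 / L = p^2+q^2+r^2*?s" by (simp add: divide_inverse)
    have Gv: "L * (?s*e1 + g1) * c1 + L * (?s*e2 - c1*c3) * c2 + L * e3 * c3
       = L * (?s*(e1*c1+e2*c2) + (g1*c1 - c1*c3*c2 + e3*c3))" using L by (simp add: field_simps)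
    show "G (inverse L) = Fk L c1 c2 c3 e1 e2 e3 p q r"
      unfolding Fk_def Let_def a1 a2 V P N D Gv red_lemma[of L, OF less_imp_neq[OF L, symmetric]]
      unfolding G_def ..
  qed
  have cont: "isCont G 0" unfolding G_def
    by (intro continuous_intros) (use c3p l in auto)
  have lim: "((\<lambda>L. G (inverse L)) \<longlongrightarrow> G 0) at_top"
    by (rule isCont_tendsto_compose[OF cont tendsto_inverse_0_at_top[OF filterlim_ident]])
  have G0: "G 0 = (p*c1 + q*(c2+c3))^2/((p^2+q^2)*c3^2)"
  proof -
    have 1: "G 0 = (g1^2 + (c1*c3)^2 - (p*g1 - q*(c1*c3))^2/(p^2+q^2))/(c3^2)^2" by (simp add: G_def power2_eq_square)
    have key: "(g1^2 + (c1*c3)^2)*(p^2+q^2) - (p*g1 - q*(c1*c3))^2 = c3^2 * (p*c1+q*(c2+c3))^2"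
      unfolding g1_def by algebra
    have "g1^2 + (c1*c3)^2 - (p*g1 - q*(c1*c3))^2/(p^2+q^2) = c3^2 * (p*c1+q*(c2+c3))^2 / (p^2+q^2)"
    proof -
      have ne: "p^2+q^2 \<noteq> 0" using l by linarith
      have "g1^2 + (c1*c3)^2 - (p*g1 - q*(c1*c3))^2/(p^2+q^2) = ((g1^2 + (c1*c3)^2)*(p^2+q^2) - (p*g1 - q*(c1*c3))^2)/(p^2+q^2)"
        using ne by (simp add: diff_divide_distrib)
      then show ?thesis unfolding key .
    qed
    note eq = this
    have c3s: "c3^2 \<noteq> 0" using c3 by simp
    have ne: "p^2+q^2 \<noteq> 0" using l by linarith
    show ?thesis unfolding 1 eq by (rule aux[OF c3s ne])
  qed
  show ?thesis using Lim_transform_eventually[OF lim ev] unfolding G0 .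
qed


lemma aux2: "(l::real) \<noteq> 0 \<Longrightarrow> W \<noteq> 0 \<Longrightarrow> (E*l - N)*W = G*l \<Longrightarrow> (E - N/l)/W^2 - G/W^3 = 0"
  by (simp add: field_simps power2_eq_square power3_eq_cube)

lemma aux3: "(L::real) \<noteq> 0 \<Longrightarrow> ((E + L*e - X)/Wq - Y)/L = (inverse L*E + e - inverse L*X)/Wq - inverse L * Y"
  by (cases "Wq = 0") (simp_all add: field_simps)

lemma Fk_c30: "Fk L c1 c2 0 e1 e2 e3 p q r =
   ((e1^2+e2^2) + L*e3^2 - (p*e1+q*e2+r*e3)^2/(p^2+q^2+r^2 * inverse L))/(c1^2+c2^2)^2 - (e1*c1+e2*c2)^2/(c1^2+c2^2)^3"
  unfolding Fk_def Let_def by (simp add: divide_inverse)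

lemma lim_ii:
  fixes c1 c2 e1 e2 p q r :: real
  assumes tang: "p*c1 + q*c2 = 0" and l: "p^2 + q^2 > 0" and W: "c1^2 + c2^2 > 0"
  shows "((\<lambda>L. Fk L c1 c2 0 e1 e2 0 p q r) \<longlongrightarrow> 0) at_top"
proof -
  define H where "H s = ((e1^2+e2^2) - (p*e1+q*e2)^2/(p^2+q^2+r^2 * s))/(c1^2+c2^2)^2 - (e1*c1+e2*c2)^2/(c1^2+c2^2)^3" for s
  have ev: "\<forall>\<^sub>F L in at_top. H (inverse L) = Fk L c1 c2 0 e1 e2 0 p q r"
    by (intro always_eventually allI) (simp add: H_def Fk_c30)
  have ne: "p^2+q^2 \<noteq> 0" using l by linarith
  have We: "c1^2+c2^2 \<noteq> 0" using W by linarith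
  have cont: "isCont H 0" unfolding H_def
    by (intro continuous_intros) (use ne We in simp_all)
  have lim: "((\<lambda>L. H (inverse L)) \<longlongrightarrow> H 0) at_top"
    by (rule isCont_tendsto_compose[OF cont tendsto_inverse_0_at_top[OF filterlim_ident]])
  have k0: "(p^2+q^2) * (((e1^2+e2^2)*(p^2+q^2) - (p*e1+q*e2)^2)*(c1^2+c2^2) - (e1*c1+e2*c2)^2*(p^2+q^2)) = 0"
    using tang by algebra
  have key: "((e1^2+e2^2)*(p^2+q^2) - (p*e1+q*e2)^2)*(c1^2+c2^2) = (e1*c1+e2*c2)^2*(p^2+q^2)"
  proof -
    have "((e1^2+e2^2)*(p^2+q^2) - (p*e1+q*e2)^2)*(c1^2+c2^2) - (e1*c1+e2*c2)^2*(p^2+q^2) = 0"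
      using k0 ne by (simp only: mult_eq_0_iff) blast
    then show ?thesis by simp
  qed
  have H0: "H 0 = 0" unfolding H_def using aux2[OF ne We key] by simp
  show ?thesis using Lim_transform_eventually[OF lim ev] unfolding H0 .
qed

lemma lim_iii:
  fixes c1 c2 e1 e2 e3 p q r :: real
  assumes l: "p^2 + q^2 > 0" and W: "c1^2 + c2^2 > 0"
  shows "((\<lambda>L. sqrt (Fk L c1 c2 0 e1 e2 e3 p q r) / sqrt L) \<longlongrightarrow> \<bar>e3\<bar> / (c1^2+c2^2)) at_top"
proof -
  define K where "K s = (s*(e1^2+e2^2) + e3^2 - s*(p*e1+q*e2+r*e3)^2/(p^2+q^2+r^2 * s))/(c1^2+c2^2)^2 - s*((e1*c1+e2*c2)^2/(c1^2+c2^2)^3)" for s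
  have ev: "\<forall>\<^sub>F L in at_top. sqrt (K (inverse L)) = sqrt (Fk L c1 c2 0 e1 e2 e3 p q r) / sqrt L"
    using eventually_gt_at_top[of 0]
  proof (rule eventually_mono)
    fix L :: real assume L: "L > 0"
    have "Fk L c1 c2 0 e1 e2 e3 p q r / L = K (inverse L)"
      unfolding Fk_c30 K_def using aux3[of L] L by simp
    then show "sqrt (K (inverse L)) = sqrt (Fk L c1 c2 0 e1 e2 e3 p q r) / sqrt L"
      by (metis real_sqrt_divide)
  qed
  have ne: "p^2+q^2 \<noteq> 0" using l by linarith
  have We: "c1^2+c2^2 \<noteq> 0" using W by linarith
  have cont: "isCont K 0" unfolding K_def
    by (intro continuous_intros) (use ne We in simp_all)
  have lim: "((\<lambda>L. K (inverse L)) \<longlongrightarrow> K 0) at_top"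
    by (rule isCont_tendsto_compose[OF cont tendsto_inverse_0_at_top[OF filterlim_ident]])
  have K0: "sqrt (K 0) = \<bar>e3\<bar> / (c1^2+c2^2)" unfolding K_def using W
    by (simp add: real_sqrt_divide)
  show ?thesis using Lim_transform_eventually[OF tendsto_real_sqrt[OF lim] ev] unfolding K0 .
qed

theorem lemma3p3:
  fixes u :: "real^3 \<Rightarrow> real" and gradu :: "real^3 \<Rightarrow> real^3" and H :: "real^3 \<Rightarrow> real^3^3"
    and \<gamma> \<gamma>' \<gamma>'' :: "real \<Rightarrow> real^3" and a b t :: real
  assumes u_deriv: "\<forall>x\<in>Gset. (u has_derivative (\<lambda>h. gradu x \<bullet> h)) (at x)"
    and grad_deriv: "\<forall>x\<in>Gset. (gradu has_derivative (\<lambda>h. H x *v h)) (at x)"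
    and H_cont: "continuous_on Gset H"
    and Sigma_compact: "compact {x\<in>Gset. u x = 0}"
    and Sigma_regular: "\<forall>x\<in>Gset. u x = 0 \<longrightarrow> gradu x \<noteq> 0"
    and ab: "a < b"
    and gamma_deriv: "\<forall>s\<in>{a..b}. (\<gamma> has_vector_derivative \<gamma>' s) (at s within {a..b})"
    and gamma'_deriv: "\<forall>s\<in>{a..b}. (\<gamma>' has_vector_derivative \<gamma>'' s) (at s within {a..b})"
    and gamma''_cont: "continuous_on {a..b} \<gamma>''"
    and gamma_regular: "\<forall>s\<in>{a..b}. \<gamma>' s \<noteq> 0"
    and gamma_in_Sigma: "\<forall>s\<in>{a..b}. \<gamma> s \<in> Gset \<and> u (\<gamma> s) = 0"
    and t_in: "t \<in> {a..b}"
    and noncharacteristic: "lX (gradu (\<gamma> t)) (\<gamma> t) \<noteq> 0"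
  shows
    "(om (\<gamma> t) (\<gamma>' t) \<noteq> 0 \<longrightarrow>
       ((\<lambda>L. geod_curv L (gradu (\<gamma> t)) (\<gamma> t) (\<gamma>' t) (\<gamma>'' t)) \<longlongrightarrow>
          \<bar>pbar (gradu (\<gamma> t)) (\<gamma> t) * \<gamma>' t $ 1 + qbar (gradu (\<gamma> t)) (\<gamma> t) * \<gamma>' t $ 2\<bar>
            / (\<bar>\<gamma> t $ 1\<bar> * \<bar>om (\<gamma> t) (\<gamma>' t)\<bar>)) at_top)
   \<and> (om (\<gamma> t) (\<gamma>' t) = 0 \<and>
        vector_derivative (\<lambda>s. om (\<gamma> s) (\<gamma>' s)) (at t within {a..b}) = 0 \<longrightarrow>
       ((\<lambda>L. geod_curv L (gradu (\<gamma> t)) (\<gamma> t) (\<gamma>' t) (\<gamma>'' t)) \<longlongrightarrow> 0) at_top)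
   \<and> (om (\<gamma> t) (\<gamma>' t) = 0 \<and>
        vector_derivative (\<lambda>s. om (\<gamma> s) (\<gamma>' s)) (at t within {a..b}) \<noteq> 0 \<longrightarrow>
       ((\<lambda>L. geod_curv L (gradu (\<gamma> t)) (\<gamma> t) (\<gamma>' t) (\<gamma>'' t) / sqrt L) \<longlongrightarrow>
          \<bar>vector_derivative (\<lambda>s. om (\<gamma> s) (\<gamma>' s)) (at t within {a..b})\<bar>
            / (qbar (gradu (\<gamma> t)) (\<gamma> t) * (\<gamma>' t $ 1 / \<gamma> t $ 1)
               - pbar (gradu (\<gamma> t)) (\<gamma> t) * \<gamma>' t $ 3)\<^sup>2) at_top)"
proof -
  define x where "x = \<gamma> t"
  define v where "v = \<gamma>' t"
  define A where "A = \<gamma>'' t"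
  define n where "n = gradu x"
  define p where "p = pX n x"
  define q where "q = qX n x"
  define r where "r = x$1 * n$2"
  define c1 where "c1 = v$1 / x$1"
  define c2 where "c2 = v$3"
  define c3 where "c3 = v$2 / x$1 - v$3"
  define e1 where "e1 = A$1/x$1 - (v$1)^2/(x$1)^2"
  define e2 where "e2 = A$3"
  define e3 where "e3 = A$2/x$1 - 2 * v$1 * v$2/(x$1)^2 + v$1 * v$3/x$1 - A$3"
  define w' where "w' = A$2/x$1 - v$2 * v$1/(x$1)^2 - A$3"
  have xG: "x \<in> Gset" and ux: "u x = 0" using gamma_in_Sigma t_in unfolding x_def by auto
  have x1: "x$1 > 0" using xG by (simp add: Gset_def)
  have c3om: "om x v = c3" by (simp add: om_def c3_def)
  have nv: "n \<bullet> v = 0"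
  proof -
    have g: "(\<gamma> has_derivative (\<lambda>h. h *\<^sub>R v)) (at t within {a..b})"
      using gamma_deriv t_in unfolding v_def has_vector_derivative_def by auto
    have uu: "(u has_derivative (\<lambda>h. n \<bullet> h)) (at (\<gamma> t) within (\<gamma> ` {a..b}))"
      using u_deriv xG unfolding n_def x_def by (auto intro: has_derivative_at_withinI)
    have "((u \<circ> \<gamma>) has_derivative ((\<lambda>h. n \<bullet> h) \<circ> (\<lambda>h. h *\<^sub>R v))) (at t within {a..b})"
      by (rule diff_chain_within[OF g uu])
    then have d1: "((u \<circ> \<gamma>) has_vector_derivative (n \<bullet> v)) (at t within {a..b})"
      unfolding has_vector_derivative_def by (simp add: o_def inner_scaleR_right)
    have d2: "((u \<circ> \<gamma>) has_vector_derivative 0) (at t within {a..b})"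
      by (rule has_vector_derivative_transform[OF t_in _ has_vector_derivative_const[of 0]])
         (use gamma_in_Sigma in auto)
    show ?thesis using vector_derivative_within_closed_interval[OF ab t_in d1]
       vector_derivative_within_closed_interval[OF ab t_in d2] by simp
  qed
  have tang: "p * c1 + q * c2 + r * c3 = 0"
    using nv dot_frame[OF x1, of n v] by (simp add: p_def q_def r_def c1_def c2_def c3_def om1_def om2_def om_def)
  have wder: "vector_derivative (\<lambda>s. om (\<gamma> s) (\<gamma>' s)) (at t within {a..b}) = w'"
  proof -
    have comp: "((\<lambda>s. f s $ i) has_real_derivative (f' $ i)) (at t within {a..b})"
      if "(f has_vector_derivative f') (at t within {a..b})" for f :: "real \<Rightarrow> real^3" and f' i
      unfolding has_real_derivative_iff_has_vector_derivative
      by (rule bounded_linear.has_vector_derivative[OF bounded_linear_vec_nth that])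
    have d1: "((\<lambda>s. \<gamma> s $ 1) has_real_derivative v$1) (at t within {a..b})"
      using comp gamma_deriv t_in unfolding v_def by blast
    have d2: "((\<lambda>s. \<gamma>' s $ 2) has_real_derivative A$2) (at t within {a..b})"
      using comp gamma'_deriv t_in unfolding A_def by blast
    have d3: "((\<lambda>s. \<gamma>' s $ 3) has_real_derivative A$3) (at t within {a..b})"
      using comp gamma'_deriv t_in unfolding A_def by blast
    have "((\<lambda>s. \<gamma>' s $ 2 / \<gamma> s $ 1 - \<gamma>' s $ 3) has_real_derivative w') (at t within {a..b})"
    proof -
      have q: "((\<lambda>s. \<gamma>' s $ 2 / \<gamma> s $ 1) has_real_derivative (A$2 * \<gamma> t $ 1 - \<gamma>' t $ 2 * v$1) / (\<gamma> t $ 1 * \<gamma> t $ 1)) (at t within {a..b})"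
        using DERIV_divide[OF d2 d1] x1 unfolding x_def by simp
      have "((\<lambda>s. \<gamma>' s $ 2 / \<gamma> s $ 1 - \<gamma>' s $ 3) has_real_derivative (A$2 * \<gamma> t $ 1 - \<gamma>' t $ 2 * v$1) / (\<gamma> t $ 1 * \<gamma> t $ 1) - A$3) (at t within {a..b})"
        by (rule DERIV_diff[OF q d3])
      moreover have "(A$2 * \<gamma> t $ 1 - \<gamma>' t $ 2 * v$1) / (\<gamma> t $ 1 * \<gamma> t $ 1) - A$3 = w'"
        using x1 unfolding x_def v_def w'_def by (simp add: field_simps power2_eq_square)
      ultimately show ?thesis by simp
    qed
    then have "((\<lambda>s. om (\<gamma> s) (\<gamma>' s)) has_vector_derivative w') (at t within {a..b})"
      unfolding has_real_derivative_iff_has_vector_derivative om_def .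
    then show ?thesis by (rule vector_derivative_within_closed_interval[OF ab t_in])
  qed
  have e3w: "e3 = w' - c1 * c3"
    unfolding e3_def w'_def c1_def c3_def using x1 by (simp add: field_simps power2_eq_square)
  have lpos: "p^2 + q^2 > 0"
  proof -
    have "sqrt (p^2 + q^2) \<noteq> 0" using noncharacteristic unfolding lX_def p_def q_def n_def x_def .
    then have "p^2 + q^2 \<noteq> 0" by auto
    moreover have "p^2 + q^2 \<ge> 0" by simp
    ultimately show ?thesis by linarith
  qed
  have lX_eq: "lX n x = sqrt (p^2 + q^2)" by (simp add: lX_def p_def q_def)
  have pb: "pbar n x = p / sqrt (p^2+q^2)" by (simp add: pbar_def lX_eq p_def)
  have qb: "qbar n x = q / sqrt (p^2+q^2)" by (simp add: qbar_def lX_eq q_def)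
  have ev: "\<forall>\<^sub>F L in at_top. sqrt (Fk L c1 c2 c3 e1 e2 e3 p q r) = geod_curv L n x v A"
    using eventually_gt_at_top[of 0]
  proof (rule eventually_mono)
    fix L :: real assume L: "L > 0"
    have D: "Dn L n x > 0"
    proof -
      have "(x$1 * n$2)^2 / L \<ge> 0" using L by simp
      then show ?thesis using lpos unfolding Dn_def p_def q_def by linarith
    qed
    show "sqrt (Fk L c1 c2 c3 e1 e2 e3 p q r) = geod_curv L n x v A"
      unfolding geod_eq[OF x1 L nv D] c1_def c2_def c3_def e1_def e2_def e3_def p_def q_def r_def ..
  qed
  have fold: "gradu (\<gamma> t) = n" "gradu x = n" "\<gamma> t = x" "\<gamma>' t = v" "\<gamma>'' t = A" by (simp_all add: n_def x_def v_def A_def)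
  have vne: "v \<noteq> 0" using gamma_regular t_in unfolding v_def by auto
  show ?thesis unfolding fold wder c3om
  proof (intro conjI impI)
    assume c3: "c3 \<noteq> 0"
    have lim: "((\<lambda>L. sqrt (Fk L c1 c2 c3 e1 e2 e3 p q r)) \<longlongrightarrow> sqrt ((p*c1 + q*(c2+c3))^2/((p^2+q^2)*c3^2))) at_top"
      by (rule tendsto_real_sqrt[OF lim_i[OF c3 lpos]])
    have val: "sqrt ((p*c1 + q*(c2+c3))^2/((p^2+q^2)*c3^2)) =
       \<bar>pbar n x * v $ 1 + qbar n x * v $ 2\<bar> / (\<bar>x $ 1\<bar> * \<bar>c3\<bar>)"
    proof -
      have s: "sqrt (p^2+q^2) > 0" using lpos by simp
      have "p*c1 + q*(c2+c3) = (p * v$1 + q * v$2) / x$1" unfolding c1_def c2_def c3_def using x1 by (simp add: field_simps)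
      then have "sqrt ((p*c1 + q*(c2+c3))^2/((p^2+q^2)*c3^2)) = \<bar>p * v$1 + q * v$2\<bar> / (\<bar>x$1\<bar> * (sqrt (p^2+q^2) * \<bar>c3\<bar>))"
        by (simp add: real_sqrt_divide real_sqrt_mult power_divide)
      also have "\<dots> = \<bar>pbar n x * v $ 1 + qbar n x * v $ 2\<bar> / (\<bar>x $ 1\<bar> * \<bar>c3\<bar>)"
      proof -
        have "pbar n x * v $ 1 + qbar n x * v $ 2 = (p * v$1 + q * v$2) / sqrt (p^2+q^2)"
          unfolding pb qb by (simp add: add_divide_distrib)
        moreover have "\<And>X a b S::real. S > 0 \<Longrightarrow> \<bar>X\<bar> / (a * (S * b)) = \<bar>X / S\<bar> / (a * b)"
          by (simp add: abs_divide divide_divide_eq_left mult.commute mult.left_commute)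
        ultimately show ?thesis using s by simp
      qed
      finally show ?thesis .
    qed
    show "((\<lambda>L. geod_curv L n x v A) \<longlongrightarrow> \<bar>pbar n x * v $ 1 + qbar n x * v $ 2\<bar> / (\<bar>x $ 1\<bar> * \<bar>c3\<bar>)) at_top"
      using Lim_transform_eventually[OF lim ev] unfolding val .
  next
    assume h: "c3 = 0 \<and> w' = 0"
    then have c30: "c3 = 0" and e30: "e3 = 0" using e3w by auto
    have tg: "p * c1 + q * c2 = 0" using tang c30 by simp
    have W: "c1^2 + c2^2 > 0"
    proof (rule ccontr)
      assume "\<not> c1^2 + c2^2 > 0"
      then have "c1 = 0" "c2 = 0" by (auto simp: not_less add_nonneg_eq_0_iff) (smt (verit) power2_less_eq_zero_iff sum_power2_le_zero_iff)+
      then have "v = 0" using c30 x1 unfolding c1_def c2_def c3_def by (auto simp: vec_eq_iff forall_3 field_simps)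
      with vne show False by simp
    qed
    have "((\<lambda>L. sqrt (Fk L c1 c2 0 e1 e2 0 p q r)) \<longlongrightarrow> sqrt 0) at_top"
      by (rule tendsto_real_sqrt[OF lim_ii[OF tg lpos W]])
    then show "((\<lambda>L. geod_curv L n x v A) \<longlongrightarrow> 0) at_top"
      using Lim_transform_eventually[OF _ ev] c30 e30 by simp
  next
    assume h: "c3 = 0 \<and> w' \<noteq> 0"
    then have c30: "c3 = 0" and e3e: "e3 = w'" using e3w by auto
    have tg: "p * c1 + q * c2 = 0" using tang c30 by simp
    have W: "c1^2 + c2^2 > 0"
    proof (rule ccontr)
      assume "\<not> c1^2 + c2^2 > 0"
      then have "c1 = 0" "c2 = 0" by (smt (verit) power2_less_eq_zero_iff sum_power2_le_zero_iff)+
      then have "v = 0" using c30 x1 unfolding c1_def c2_def c3_def by (auto simp: vec_eq_iff forall_3 field_simps)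
      with vne show False by simp
    qed
    have lim: "((\<lambda>L. sqrt (Fk L c1 c2 0 e1 e2 e3 p q r) / sqrt L) \<longlongrightarrow> \<bar>e3\<bar> / (c1^2+c2^2)) at_top"
      by (rule lim_iii[OF lpos W])
    have ev3: "\<forall>\<^sub>F L in at_top. sqrt (Fk L c1 c2 0 e1 e2 e3 p q r) / sqrt L = geod_curv L n x v A / sqrt L"
      using ev c30 by (auto elim: eventually_mono)
    have val: "c1^2 + c2^2 = (qbar n x * (v $ 1 / x $ 1) - pbar n x * v $ 3)^2"
    proof -
      have s: "sqrt (p^2+q^2) > 0" using lpos by simp
      have s2: "(sqrt (p^2+q^2))^2 = p^2+q^2" using lpos by simp
      have k: "(q * c1 - p * c2)^2 = (p^2+q^2) * (c1^2+c2^2)"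
        using tg by algebra
      have "qbar n x * (v $ 1 / x $ 1) - pbar n x * v $ 3 = (q * c1 - p * c2) / sqrt (p^2+q^2)"
        unfolding pb qb c1_def c2_def by (simp add: diff_divide_distrib)
      then have "(qbar n x * (v $ 1 / x $ 1) - pbar n x * v $ 3)^2 = (p^2+q^2) * (c1^2+c2^2) / (p^2+q^2)"
        by (simp add: power_divide s2 k)
      also have "\<dots> = c1^2 + c2^2" using lpos by (metis less_irrefl nonzero_mult_div_cancel_left)
      finally show ?thesis by simp
    qed
    show "((\<lambda>L. geod_curv L n x v A / sqrt L) \<longlongrightarrow> \<bar>w'\<bar> / (qbar n x * (v $ 1 / x $ 1) - pbar n x * v $ 3)\<^sup>2) at_top"
      using Lim_transform_eventually[OF lim ev3] unfolding val e3e .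
  qed
qed

end
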